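(* Let $\alpha\in\mathbb{N}$ and $n\geq 2$. Let $-\infty<\xi_1<\xi_2<\cdots<\xi_n<\infty$ be distinct real numbers and $w_1,\dots,w_n\in\mathbb{R}$ arbitrary, and let $Q_n(f)=\sum_{j=1}^n w_j f(\xi_j)$. Let \[ \sigma:=\begin{cases}\alpha & \text{if } \min_{j=1,\dots,n-1}(\xi_{j+1}-\xi_j)\leq 1,\\ 0 & \text{otherwise.}\end{cases} \] Then there exists a constant $c_\alpha>0$, depending only on $\alpha$, such that \[ e^{\mathrm{wor}}(Q_n,\mathscr{H}_\alpha)\geq c_\alpha \min_{i=1,\dots,n-1}(\xi_{i+1}-\xi_i)^{\sigma+1/2}\sum_{j=1}^{n-1}\mathrm{e}^{-\max(\xi_j^2,\xi_{j+1}^2)/2}\left(\sum_{k=1}^{n-1}\mathrm{e}^{-\mathbb{1}_{\geq 0}(\xi_k\xi_{k+1})\min(\xi_k^2,\xi_{k+1}^2)/2}\right)^{-1/2}, \] where $\mathbb{1}_{\geq 0}(x)=1$ if $x\geq 0$ and $0$ otherwise.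
   Context: Let $\rho(x)=\frac{1}{\sqrt{2\pi}}\mathrm{e}^{-x^2/2}$ and $L^2_\rho$ the space of (equivalence classes of) measurable $f:\mathbb{R}\to\mathbb{R}$ with $\|f\|_{L^2_\rho}^2=\int_\mathbb{R}|f(x)|^2\rho(x)\,\mathrm{d}x<\infty$. For $\alpha\in\mathbb{N}$, the weighted Sobolev space $\mathscr{H}_\alpha$ is the set of $f\in L^2_\rho$ having weak derivatives $f^{(\tau)}\in L^2_\rho$ for $\tau=1,\dots,\alpha$, with norm $\|f\|_\alpha=(\sum_{\tau=0}^\alpha\|f^{(\tau)}\|_{L^2_\rho}^2)^{1/2}$; elements are identified with their continuous representatives. Let $I(f)=\int_\mathbb{R}f(x)\rho(x)\,\mathrm{d}x$. For a quadrature rule $Q_n$, the worst-case error is $e^{\mathrm{wor}}(Q_n,\mathscr{H}_\alpha)=\sup_{0\neq f\in\mathscr{H}_\alpha}|I(f)-Q_n(f)|/\|f\|_\alpha$. *)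

theory Defs
  imports "HOL-Analysis.Analysis"
begin

definition gauss_rho :: "real \<Rightarrow> real" where
  "gauss_rho x = exp (- (x\<^sup>2) / 2) / sqrt (2 * pi)"

definition L2rho :: "(real \<Rightarrow> real) \<Rightarrow> bool" where
  "L2rho f \<longleftrightarrow> f \<in> borel_measurable lborel \<and>
     integrable lborel (\<lambda>x. (f x)\<^sup>2 * gauss_rho x)"

definition test_fun :: "(real \<Rightarrow> real) \<Rightarrow> bool" where
  "test_fun \<phi> \<longleftrightarrow> (\<forall>k x. ((deriv ^^ k) \<phi>) differentiable (at x)) \<and>
     (\<exists>R. \<forall>x. \<bar>x\<bar> > R \<longrightarrow> \<phi> x = 0)"

definition weak_derivs :: "nat \<Rightarrow> (real \<Rightarrow> real) \<Rightarrow> (nat \<Rightarrow> real \<Rightarrow> real) \<Rightarrow> bool" where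
  "weak_derivs \<alpha> f g \<longleftrightarrow> g 0 = f \<and> (\<forall>\<tau>\<le>\<alpha>. L2rho (g \<tau>)) \<and>
     (\<forall>\<tau>. 1 \<le> \<tau> \<and> \<tau> \<le> \<alpha> \<longrightarrow> (\<forall>\<phi>. test_fun \<phi> \<longrightarrow>
        integral\<^sup>L lborel (\<lambda>x. f x * (deriv ^^ \<tau>) \<phi> x)
          = (-1) ^ \<tau> * integral\<^sup>L lborel (\<lambda>x. g \<tau> x * \<phi> x)))"

text \<open>Weighted Sobolev space, elements given by their continuous representatives.\<close>
definition Hspace :: "nat \<Rightarrow> (real \<Rightarrow> real) set" where
  "Hspace \<alpha> = {f. continuous_on UNIV f \<and> (\<exists>g. weak_derivs \<alpha> f g)}"

definition Hnorm :: "nat \<Rightarrow> (real \<Rightarrow> real) \<Rightarrow> real" where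
  "Hnorm \<alpha> f = (let g = (SOME g. weak_derivs \<alpha> f g) in
     sqrt (\<Sum>\<tau>\<le>\<alpha>. integral\<^sup>L lborel (\<lambda>x. (g \<tau> x)\<^sup>2 * gauss_rho x)))"

definition gauss_int :: "(real \<Rightarrow> real) \<Rightarrow> real" where
  "gauss_int f = integral\<^sup>L lborel (\<lambda>x. f x * gauss_rho x)"

definition quad :: "nat \<Rightarrow> (nat \<Rightarrow> real) \<Rightarrow> (nat \<Rightarrow> real) \<Rightarrow> (real \<Rightarrow> real) \<Rightarrow> real" where
  "quad n \<xi> w f = (\<Sum>j=1..n. w j * f (\<xi> j))"

definition wce :: "nat \<Rightarrow> nat \<Rightarrow> (nat \<Rightarrow> real) \<Rightarrow> (nat \<Rightarrow> real) \<Rightarrow> ereal" where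
  "wce \<alpha> n \<xi> w = (SUP f \<in> {f \<in> Hspace \<alpha>. f \<noteq> (\<lambda>_. 0)}.
       ereal (\<bar>gauss_int f - quad n \<xi> w f\<bar> / Hnorm \<alpha> f))"

definition ind_nonneg :: "real \<Rightarrow> real" where
  "ind_nonneg x = (if x \<ge> 0 then 1 else 0)"

end

theory Submission
  imports Defs "HOL-Computational_Algebra.Polynomial"
begin

primrec Ck :: "nat \<Rightarrow> (real \<Rightarrow> real) \<Rightarrow> bool" where
  "Ck 0 f = True"
| "Ck (Suc k) f = ((\<forall>x. f differentiable (at x)) \<and> Ck k (deriv f))"

lemma Ck_SucD: "Ck (Suc k) f \<Longrightarrow> Ck k f"
  by (induction k arbitrary: f) auto

lemma Ck_le: "m \<le> k \<Longrightarrow> Ck k f \<Longrightarrow> Ck m f"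
  apply (induction k rule: dec_induct)
   apply simp
  by (metis Ck_SucD)

lemma deriv_ext: "(\<And>x. (f has_real_derivative f' x) (at x)) \<Longrightarrow> deriv f = f'"
  by (rule ext) (simp add: DERIV_imp_deriv)

lemma diff_DERIV: "f differentiable (at x) \<Longrightarrow> (f has_real_derivative deriv f x) (at x)"
  using DERIV_deriv_iff_real_differentiable by blast

lemma Ck_const: "Ck k (\<lambda>x. c)"
proof (induction k arbitrary: c)
  case (Suc k)
  have "deriv (\<lambda>x. c) = (\<lambda>x. 0)" by (rule deriv_ext) auto
  then show ?case using Suc by auto
qed simp

lemma Ck_add: "Ck k f \<Longrightarrow> Ck k g \<Longrightarrow> Ck k (\<lambda>x. f x + g x)"
proof (induction k arbitrary: f g)
  case (Suc k)
  have "deriv (\<lambda>x. f x + g x) = (\<lambda>x. deriv f x + deriv g x)"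
    using Suc.prems by (intro deriv_ext) (auto intro!: derivative_eq_intros diff_DERIV)
  then show ?case using Suc by auto
qed simp

lemma Ck_mult: "Ck k f \<Longrightarrow> Ck k g \<Longrightarrow> Ck k (\<lambda>x. f x * g x)"
proof (induction k arbitrary: f g)
  case (Suc k)
  have "deriv (\<lambda>x. f x * g x) = (\<lambda>x. deriv f x * g x + f x * deriv g x)"
    using Suc.prems by (intro deriv_ext) (auto intro!: derivative_eq_intros diff_DERIV)
  moreover have "Ck k (\<lambda>x. deriv f x * g x + f x * deriv g x)"
    using Suc Ck_SucD[OF Suc.prems(1)] Ck_SucD[OF Suc.prems(2)] by (intro Ck_add Suc.IH) auto
  ultimately show ?case using Suc by auto
qed simp

lemma Ck_cmult: "Ck k f \<Longrightarrow> Ck k (\<lambda>x. c * f x)"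
  using Ck_mult[OF Ck_const] .

lemma Ck_affine: "Ck k f \<Longrightarrow> Ck k (\<lambda>x. f (a * x + c))"
proof (induction k arbitrary: f)
  case (Suc k)
  have D: "((\<lambda>x. f (a * x + c)) has_real_derivative a * deriv f (a * x + c)) (at x)" for x
  proof -
    have "((\<lambda>x. a * x + c) has_real_derivative a) (at x)"
      by (auto intro!: derivative_eq_intros)
    from DERIV_chain2[OF diff_DERIV this] Suc.prems
    show ?thesis by (simp add: mult.commute)
  qed
  have "deriv (\<lambda>x. f (a * x + c)) = (\<lambda>x. a * deriv f (a * x + c))"
    by (rule deriv_ext[OF D])
  moreover have "\<forall>x. (\<lambda>x. f (a * x + c)) differentiable (at x)"
    using D real_differentiable_def by blast
  ultimately show ?case using Suc by (auto intro!: Ck_cmult)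
qed simp

lemma Ck_inverse: "(\<And>x. f x \<noteq> 0) \<Longrightarrow> Ck k f \<Longrightarrow> Ck k (\<lambda>x. inverse (f x))"
proof (induction k arbitrary: f)
  case (Suc k)
  have "deriv (\<lambda>x. inverse (f x)) = (\<lambda>x. - deriv f x * (inverse (f x) * inverse (f x)))"
    using Suc.prems by (intro deriv_ext)
       (auto intro!: derivative_eq_intros DERIV_chain2[OF diff_DERIV] simp: power2_eq_square)
  moreover have "Ck k (\<lambda>x. - deriv f x * (inverse (f x) * inverse (f x)))"
  proof -
    have h1: "Ck k (\<lambda>x. - deriv f x)" using Suc.prems Ck_cmult[of k "deriv f" "-1"] by auto
    have h2: "Ck k (\<lambda>x. inverse (f x))" using Suc.IH Suc.prems Ck_SucD by blast
    show ?thesis by (rule Ck_mult[OF h1 Ck_mult[OF h2 h2]])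
  qed
  moreover have "\<forall>x. (\<lambda>x. inverse (f x)) differentiable (at x)"
    using Suc.prems by (auto intro!: derivative_eq_intros)
  ultimately show ?case using Suc by auto
qed simp

lemma Ck_sum: "finite A \<Longrightarrow> (\<And>j. j \<in> A \<Longrightarrow> Ck k (f j)) \<Longrightarrow> Ck k (\<lambda>x. \<Sum>j\<in>A. f j x)"
  by (induction A rule: finite_induct) (auto intro: Ck_const Ck_add)

lemma Ck_deriv_funpow: "Ck (k + m) f \<Longrightarrow> Ck m ((deriv ^^ k) f)"
proof (induction k arbitrary: f)
  case (Suc k)
  then show ?case by (simp add: funpow_Suc_right del: funpow.simps)
qed simp

definition smooth :: "(real \<Rightarrow> real) \<Rightarrow> bool" where
  "smooth f \<longleftrightarrow> (\<forall>k. Ck k f)"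

lemma smooth_diff: "smooth f \<Longrightarrow> ((deriv ^^ k) f) differentiable (at x)"
  using Ck_deriv_funpow[of k 1 f] unfolding smooth_def by auto

lemma smooth_DERIV: "smooth f \<Longrightarrow> ((deriv ^^ k) f has_real_derivative (deriv ^^ Suc k) f x) (at x)"
  using diff_DERIV[OF smooth_diff] by simp

lemma smooth_cont: "smooth f \<Longrightarrow> continuous_on UNIV ((deriv ^^ k) f)"
  by (meson continuous_at_imp_continuous_on differentiable_imp_continuous_within smooth_diff)

definition EP :: "real poly \<Rightarrow> real \<Rightarrow> real" where
  "EP P x = (if x > 0 then poly P (1/x) * exp (-(1/x)) else 0)"

definition TP :: "real poly \<Rightarrow> real poly" where
  "TP P = [:0,0,1:] * (P - pderiv P)"

lemma polyexp_lim: "((\<lambda>y::real. poly (R::real poly) y * exp (-y)) \<longlongrightarrow> 0) at_top"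
proof -
  have "((\<lambda>y. \<Sum>i\<le>degree R. coeff R i * (y ^ i / exp y)) \<longlongrightarrow> (\<Sum>i\<le>degree R. coeff R i * 0)) at_top"
    by (intro tendsto_sum tendsto_mult tendsto_const tendsto_power_div_exp_0)
  moreover have "poly R y * exp (-y) = (\<Sum>i\<le>degree R. coeff R i * (y ^ i / exp y))" for y
    by (simp add: poly_altdef sum_distrib_right exp_minus divide_inverse mult.assoc)
  ultimately show ?thesis by simp
qed

lemma EP_deriv_pos:
  assumes "x > 0"
  shows "(EP P has_real_derivative EP (TP P) x) (at x)"
proof -
  have "((\<lambda>x. poly P (1/x) * exp (-(1/x))) has_real_derivative
          poly (pderiv P) (1/x) * (- 1 / x^2) * exp (-(1/x)) + poly P (1/x) * (exp (-(1/x)) * (1/x^2))) (at x)"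
    using assms
    by (auto intro!: derivative_eq_intros DERIV_chain2[OF poly_DERIV] simp: power2_eq_square)
  moreover have "poly (pderiv P) (1/x) * (- 1 / x^2) * exp (-(1/x)) + poly P (1/x) * (exp (-(1/x)) * (1/x^2))
      = EP (TP P) x"
    using assms by (simp add: EP_def TP_def algebra_simps power2_eq_square)
  ultimately have "((\<lambda>x. poly P (1/x) * exp (-(1/x))) has_real_derivative EP (TP P) x) (at x)"
    by simp
  then show ?thesis
    by (rule has_field_derivative_transform_within_open[where S="{0<..}"]) (use assms in \<open>auto simp: EP_def\<close>)
qed

lemma EP_deriv_neg:
  assumes "x < 0"
  shows "(EP P has_real_derivative EP (TP P) x) (at x)"
proof -
  have "((\<lambda>x. 0) has_real_derivative 0) (at x)" by simp
  then have "(EP P has_real_derivative 0) (at x)"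
    by (rule has_field_derivative_transform_within_open[where S="{..<0}"]) (use assms in \<open>auto simp: EP_def\<close>)
  then show ?thesis using assms by (simp add: EP_def)
qed

lemma EP_deriv_0: "(EP P has_real_derivative EP (TP P) 0) (at 0)"
proof -
  have "((\<lambda>y. (EP P y - EP P 0) / (y - 0)) \<longlongrightarrow> 0) (at 0)"
  proof (rule filterlim_split_at)
    have "eventually (\<lambda>y. 0 = (EP P y - EP P 0) / (y - 0)) (at_left (0::real))"
      using eventually_at_left_real[of "-1" 0] by (auto elim!: eventually_mono simp: EP_def)
    then show "((\<lambda>y. (EP P y - EP P 0) / (y - 0)) \<longlongrightarrow> 0) (at_left 0)"
      by (rule Lim_transform_eventually[OF tendsto_const])
  next
    have lim: "((\<lambda>y. poly (pCons 0 P) (inverse y) * exp (- inverse y)) \<longlongrightarrow> 0) (at_right 0)"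
      using filterlim_compose[OF polyexp_lim filterlim_inverse_at_top_right, of "pCons 0 P"] by simp
    have "eventually (\<lambda>y. poly (pCons 0 P) (inverse y) * exp (- inverse y) = (EP P y - EP P 0) / (y - 0)) (at_right (0::real))"
      using eventually_at_right_real[of 0 1] by (auto elim!: eventually_mono simp: EP_def field_simps)
    then show "((\<lambda>y. (EP P y - EP P 0) / (y - 0)) \<longlongrightarrow> 0) (at_right 0)"
      by (rule Lim_transform_eventually[OF lim])
  qed
  then show ?thesis
    by (simp add: has_field_derivative_iff EP_def)
qed

lemma EP_deriv: "(EP P has_real_derivative EP (TP P) x) (at x)"
  using EP_deriv_0 EP_deriv_pos EP_deriv_neg by (cases "x = 0") (auto simp: neq_iff)

lemma Ck_EP: "Ck k (EP P)"
proof (induction k arbitrary: P)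
  case (Suc k)
  have "deriv (EP P) = EP (TP P)" by (rule deriv_ext[OF EP_deriv])
  moreover have "\<forall>x. EP P differentiable (at x)"
    using EP_deriv real_differentiable_def by blast
  ultimately show ?case using Suc by simp
qed simp

definition Efun :: "real \<Rightarrow> real" where "Efun x = (if x > 0 then exp (-(1/x)) else 0)"

lemma Efun_EP: "Efun = EP 1"
  by (auto simp: Efun_def EP_def)

lemma smooth_Efun: "smooth Efun"
  unfolding smooth_def Efun_EP using Ck_EP by blast

lemma Efun_nonneg: "Efun x \<ge> 0" by (simp add: Efun_def)
lemma Efun_pos: "x > 0 \<Longrightarrow> Efun x > 0" by (simp add: Efun_def)
lemma Efun_zero: "x \<le> 0 \<Longrightarrow> Efun x = 0" by (simp add: Efun_def)

lemma smooth_const: "smooth (\<lambda>x. c)" by (simp add: smooth_def Ck_const)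
lemma smooth_add: "smooth f \<Longrightarrow> smooth g \<Longrightarrow> smooth (\<lambda>x. f x + g x)" by (simp add: smooth_def Ck_add)
lemma smooth_mult: "smooth f \<Longrightarrow> smooth g \<Longrightarrow> smooth (\<lambda>x. f x * g x)" by (simp add: smooth_def Ck_mult)
lemma smooth_affine: "smooth f \<Longrightarrow> smooth (\<lambda>x. f (a * x + c))" by (simp add: smooth_def Ck_affine)
lemma smooth_inverse: "(\<And>x. f x \<noteq> 0) \<Longrightarrow> smooth f \<Longrightarrow> smooth (\<lambda>x. inverse (f x))"
  by (simp add: smooth_def Ck_inverse)
lemma smooth_sum: "finite A \<Longrightarrow> (\<And>j. j \<in> A \<Longrightarrow> smooth (f j)) \<Longrightarrow> smooth (\<lambda>x. \<Sum>j\<in>A. f j x)"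
  by (simp add: smooth_def Ck_sum)

lemma smooth_test_fun: "smooth \<phi> \<Longrightarrow> (\<forall>x. \<bar>x\<bar> > R \<longrightarrow> \<phi> x = 0) \<Longrightarrow> test_fun \<phi>"
  unfolding test_fun_def using smooth_diff by blast

lemma test_fun_DERIV: "test_fun \<phi> \<Longrightarrow> ((deriv ^^ k) \<phi> has_real_derivative (deriv ^^ Suc k) \<phi> x) (at x)"
  unfolding test_fun_def using diff_DERIV by simp

lemma test_fun_cont: "test_fun \<phi> \<Longrightarrow> continuous_on UNIV ((deriv ^^ k) \<phi>)"
  unfolding test_fun_def
  by (meson continuous_at_imp_continuous_on differentiable_imp_continuous_within)

lemma zero_outside_deriv:
  fixes g :: "real \<Rightarrow> real"
  assumes "\<forall>x. g differentiable (at x)" "\<forall>x. x < a \<or> x > b \<longrightarrow> g x = 0"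
  shows "\<forall>x. x < a \<or> x > b \<longrightarrow> deriv g x = 0"
proof (intro allI impI)
  fix x :: real assume x: "x < a \<or> x > b"
  have "((\<lambda>x. 0) has_real_derivative 0) (at x)" by simp
  then have "(g has_real_derivative 0) (at x)"
  proof (rule has_field_derivative_transform_within_open[where S="{..<a} \<union> {b<..}"])
  qed (use x assms in auto)
  then show "deriv g x = 0" by (simp add: DERIV_imp_deriv)
qed

lemma zero_outside_derivs:
  assumes "smooth g" "\<forall>x. x < a \<or> x > b \<longrightarrow> g x = 0"
  shows "\<forall>x. x < a \<or> x > b \<longrightarrow> (deriv ^^ k) g x = 0"
proof (induction k)
  case (Suc k)
  then show ?case using zero_outside_deriv[of "(deriv ^^ k) g" a b] smooth_diff[OF assms(1)] by simp
qed (use assms in simp)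

lemma lint_eq_integral:
  fixes w :: "real \<Rightarrow> real"
  assumes "continuous_on UNIV w" "\<forall>x. x < c \<or> x > d \<longrightarrow> w x = 0"
  shows "integrable lborel w" "integral\<^sup>L lborel w = integral {c..d} w"
proof -
  have eq: "w = (\<lambda>x. indicator {c..d} x *\<^sub>R w x)"
  proof
    fix x show "w x = indicator {c..d} x *\<^sub>R w x"
      using assms(2) by (cases "x \<in> {c..d}") (auto simp: not_le)
  qed
  have int: "integrable lborel (\<lambda>x. indicator {c..d} x *\<^sub>R w x)"
    by (rule borel_integrable_compact) (auto intro: continuous_on_subset[OF assms(1)])
  then show "integrable lborel w" using eq by simp
  have "integral\<^sup>L lborel w = (LINT x : {c..d} | lborel. w x)"
    by (subst eq) (simp add: set_lebesgue_integral_def)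
  also have "\<dots> = integral {c..d} w"
    using int by (intro set_borel_integral_eq_integral) (simp add: set_integrable_def)
  finally show "integral\<^sup>L lborel w = integral {c..d} w" .
qed

lemma ibp:
  assumes u: "\<And>x. (u has_real_derivative u' x) (at x)" "continuous_on UNIV u'"
    and v: "\<And>x. (v has_real_derivative v' x) (at x)" "continuous_on UNIV v'"
    and z: "\<forall>x. x < a \<or> x > b \<longrightarrow> u x = 0 \<and> u' x = 0"
  shows "integral\<^sup>L lborel (\<lambda>x. u x * v' x) = - integral\<^sup>L lborel (\<lambda>x. u' x * v x)"
proof -
  have cu: "continuous_on UNIV u"
    by (meson DERIV_isCont continuous_at_imp_continuous_on u(1))
  have cv: "continuous_on UNIV v"
    by (meson DERIV_isCont continuous_at_imp_continuous_on v(1))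
  define c where "c = min a b - 1"
  define d where "d = max a b + 1"
  have cd: "c \<le> d" unfolding c_def d_def by simp
  have uc: "u c = 0" "u d = 0" using z unfolding c_def d_def by auto
  have "((\<lambda>x. u' x * v x + u x * v' x) has_integral (u d * v d - u c * v c)) {c..d}"
  proof (rule fundamental_theorem_of_calculus[OF cd])
    fix x
    have "((\<lambda>x. u x * v x) has_real_derivative u' x * v x + u x * v' x) (at x)"
      using u v by (auto intro!: derivative_eq_intros)
    then show "((\<lambda>x. u x * v x) has_vector_derivative u' x * v x + u x * v' x) (at x within {c..d})"
      using has_field_derivative_imp_has_derivative has_vector_derivative_at_within
            has_real_derivative_iff_has_vector_derivative by blast
  qed
  then have I0: "integral {c..d} (\<lambda>x. u' x * v x + u x * v' x) = 0"
    using uc by (simp add: integral_unique)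
  have c1: "continuous_on UNIV (\<lambda>x. u x * v' x)" "continuous_on UNIV (\<lambda>x. u' x * v x)"
    using cu cv u v by (auto intro!: continuous_intros)
  have z1: "\<forall>x. x < c \<or> x > d \<longrightarrow> u x * v' x = 0" "\<forall>x. x < c \<or> x > d \<longrightarrow> u' x * v x = 0"
    using z unfolding c_def d_def by auto
  have "integral {c..d} (\<lambda>x. u' x * v x + u x * v' x)
      = integral {c..d} (\<lambda>x. u' x * v x) + integral {c..d} (\<lambda>x. u x * v' x)"
    by (intro integral_add integrable_continuous_interval continuous_on_subset[OF c1(1)]
        continuous_on_subset[OF c1(2)]) auto
  then show ?thesis
    using I0 lint_eq_integral(2)[OF c1(1) z1(1)] lint_eq_integral(2)[OF c1(2) z1(2)] by simp
qed

lemma smooth_weak_aux: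
  assumes f: "smooth f" "\<forall>x. x < a \<or> x > b \<longrightarrow> f x = 0" and \<phi>: "test_fun \<phi>"
  shows "k \<le> \<tau> \<Longrightarrow> integral\<^sup>L lborel (\<lambda>x. f x * (deriv ^^ \<tau>) \<phi> x)
     = (-1) ^ k * integral\<^sup>L lborel (\<lambda>x. (deriv ^^ k) f x * (deriv ^^ (\<tau> - k)) \<phi> x)"
proof (induction k)
  case (Suc k)
  then have k: "k \<le> \<tau>" by simp
  obtain m where m: "\<tau> - k = Suc m" "\<tau> - Suc k = m" using Suc.prems
    by (metis Suc_diff_Suc Suc_le_lessD diff_Suc_1)
  have "integral\<^sup>L lborel (\<lambda>x. (deriv ^^ k) f x * (deriv ^^ Suc m) \<phi> x)
      = - integral\<^sup>L lborel (\<lambda>x. (deriv ^^ Suc k) f x * (deriv ^^ m) \<phi> x)"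
  proof (rule ibp)
    show "((deriv ^^ k) f has_real_derivative (deriv ^^ Suc k) f x) (at x)" for x
      using smooth_DERIV[OF f(1)] .
    show "continuous_on UNIV ((deriv ^^ Suc k) f)" using smooth_cont[OF f(1)] .
    show "((deriv ^^ m) \<phi> has_real_derivative (deriv ^^ Suc m) \<phi> x) (at x)" for x
      using test_fun_DERIV[OF \<phi>] .
    show "continuous_on UNIV ((deriv ^^ Suc m) \<phi>)" using test_fun_cont[OF \<phi>] .
    show "\<forall>x. x < a \<or> x > b \<longrightarrow> (deriv ^^ k) f x = 0 \<and> (deriv ^^ Suc k) f x = 0"
      using zero_outside_derivs[OF f] by blast
  qed
  then show ?case using Suc.IH[OF k] m by simp
qed simp

lemma smooth_weak:
  assumes f: "smooth f" "\<forall>x. x < a \<or> x > b \<longrightarrow> f x = 0" and \<phi>: "test_fun \<phi>"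
  shows "integral\<^sup>L lborel (\<lambda>x. f x * (deriv ^^ \<tau>) \<phi> x)
     = (-1) ^ \<tau> * integral\<^sup>L lborel (\<lambda>x. (deriv ^^ \<tau>) f x * \<phi> x)"
  using smooth_weak_aux[OF assms, of \<tau> \<tau>] by simp

definition Sstep :: "real \<Rightarrow> real" where
  "Sstep t = Efun t * inverse (Efun t + Efun (1 - t))"

lemma Efun_sum_pos: "Efun t + Efun (1 - t) > 0"
proof (cases "t > 0")
  case True
  then show ?thesis using Efun_pos[of t] Efun_nonneg[of "1-t"] by linarith
next
  case False
  then show ?thesis using Efun_pos[of "1-t"] Efun_nonneg[of t] by linarith
qed

lemma smooth_Sstep: "smooth Sstep"
proof -
  have e1: "smooth (\<lambda>t. Efun ((-1) * t + 1))" by (rule smooth_affine[OF smooth_Efun])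
  have "smooth (\<lambda>t. Efun t + Efun (1 - t))"
    using smooth_add[OF smooth_Efun e1] by simp
  then have "smooth (\<lambda>t. inverse (Efun t + Efun (1 - t)))"
    by (rule smooth_inverse[rotated]) (use Efun_sum_pos in \<open>metis less_irrefl\<close>)
  then show ?thesis unfolding Sstep_def[abs_def] by (rule smooth_mult[OF smooth_Efun])
qed

lemma Sstep_0: "t \<le> 0 \<Longrightarrow> Sstep t = 0" by (simp add: Sstep_def Efun_zero)
lemma Sstep_1: "t \<ge> 1 \<Longrightarrow> Sstep t = 1"
  using Efun_pos[of t] by (simp add: Sstep_def Efun_zero)
lemma Sstep_bounds: "0 \<le> Sstep t" "Sstep t \<le> 1"
proof -
  have p: "Efun t + Efun (1 - t) > 0" by (rule Efun_sum_pos)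
  show "0 \<le> Sstep t" unfolding Sstep_def using p Efun_nonneg[of t] by simp
  have "Efun t \<le> Efun t + Efun (1 - t)" using Efun_nonneg[of "1-t"] by simp
  then show "Sstep t \<le> 1" unfolding Sstep_def using p by (simp add: field_simps)
qed

definition approx_ind :: "real \<Rightarrow> real \<Rightarrow> nat \<Rightarrow> real \<Rightarrow> real" where
  "approx_ind a b k x = Sstep (real (Suc k) * (x - a) + 1) * Sstep (real (Suc k) * (b - x) + 1)"

lemma approx_ind_smooth: "smooth (approx_ind a b k)"
proof -
  have "smooth (\<lambda>x. Sstep (real (Suc k) * x + (1 - real (Suc k) * a)))"
    by (rule smooth_affine[OF smooth_Sstep])
  moreover have "smooth (\<lambda>x. Sstep ((- real (Suc k)) * x + (real (Suc k) * b + 1)))"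
    by (rule smooth_affine[OF smooth_Sstep])
  ultimately have "smooth (\<lambda>x. Sstep (real (Suc k) * x + (1 - real (Suc k) * a)) *
      Sstep ((- real (Suc k)) * x + (real (Suc k) * b + 1)))"
    by (rule smooth_mult)
  then show ?thesis unfolding approx_ind_def[abs_def] by (simp add: algebra_simps)
qed

lemma approx_ind_bound: "\<bar>approx_ind a b k x\<bar> \<le> 1"
  using Sstep_bounds[of "real (Suc k) * (x - a) + 1"] Sstep_bounds[of "real (Suc k) * (b - x) + 1"]
  unfolding approx_ind_def by (simp add: abs_mult mult_le_one)

lemma approx_ind_zero: "x < a - 1 \<or> x > b + 1 \<Longrightarrow> approx_ind a b k x = 0"
proof -
  assume x: "x < a - 1 \<or> x > b + 1"
  have k: "real (Suc k) \<ge> 1" by simp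
  show ?thesis
  proof (cases "x < a - 1")
    case True
    have "1 * (a - x) \<le> real (Suc k) * (a - x)" using k True by (intro mult_right_mono) auto
    then have "real (Suc k) * (x - a) + 1 \<le> 0" using True by (simp add: algebra_simps del: of_nat_Suc)
    then show ?thesis by (simp add: approx_ind_def Sstep_0)
  next
    case False
    then have xb: "x > b + 1" using x by simp
    have "1 * (x - b) \<le> real (Suc k) * (x - b)" using k xb by (intro mult_right_mono) auto
    then have "real (Suc k) * (b - x) + 1 \<le> 0" using xb by (simp add: algebra_simps del: of_nat_Suc)
    then show ?thesis by (simp add: approx_ind_def Sstep_0)
  qed
qed

lemma approx_ind_test: "test_fun (approx_ind a b k)"
  by (rule smooth_test_fun[OF approx_ind_smooth, where R="\<bar>a\<bar> + \<bar>b\<bar> + 1"])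
     (auto intro!: approx_ind_zero)

lemma approx_ind_lim: "(\<lambda>k. approx_ind a b k x) \<longlonglongrightarrow> indicator {a..b} x"
proof (cases "x \<in> {a..b}")
  case True
  have "approx_ind a b k x = 1" for k
  proof -
    have "real (Suc k) * (x - a) \<ge> 0" "real (Suc k) * (b - x) \<ge> 0" using True by auto
    then show ?thesis unfolding approx_ind_def by (simp add: Sstep_1 del: of_nat_Suc)
  qed
  then show ?thesis using True by simp
next
  case False
  then have d: "a - x > 0 \<or> x - b > 0" by auto
  then have pos: "max (a - x) (x - b) > 0" by auto
  obtain N :: nat where N: "1 / max (a - x) (x - b) < real N" using reals_Archimedean2 by blast
  have "eventually (\<lambda>k. approx_ind a b k x = 0) sequentially"
    unfolding eventually_sequentially
  proof (intro exI allI impI)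
    fix k assume "N \<le> k"
    then have "1 / max (a - x) (x - b) < real (Suc k)" using N by linarith
    then have lt: "1 < real (Suc k) * max (a - x) (x - b)" using pos by (simp add: field_simps)
    show "approx_ind a b k x = 0"
    proof (cases "a - x \<ge> x - b")
      case True
      then have "1 < real (Suc k) * (a - x)" using lt by (simp add: max_absorb1 del: of_nat_Suc)
      then have "real (Suc k) * (x - a) + 1 \<le> 0" by (simp add: algebra_simps)
      then show ?thesis by (simp add: approx_ind_def Sstep_0)
    next
      case False
      then have "1 < real (Suc k) * (x - b)" using lt by (simp add: max_absorb2 del: of_nat_Suc)
      then have "real (Suc k) * (b - x) + 1 \<le> 0" by (simp add: algebra_simps)
      then show ?thesis by (simp add: approx_ind_def Sstep_0)
    qed
  qed
  then show ?thesis using False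
    by (simp add: tendsto_eventually)
qed

lemma interval_zero:
  fixes G :: "real \<Rightarrow> real"
  assumes G[measurable]: "G \<in> borel_measurable lborel"
    and loc: "\<And>c d. integrable lborel (\<lambda>x. G x * indicator {c..d} x)"
    and test: "\<And>\<phi>. test_fun \<phi> \<Longrightarrow> integral\<^sup>L lborel (\<lambda>x. G x * \<phi> x) = 0"
  shows "integral\<^sup>L lborel (\<lambda>x. G x * indicator {a..b} x) = 0"
proof -
  let ?w = "\<lambda>x. \<bar>G x * indicator {a-1..b+1} x\<bar>"
  have meas: "(\<lambda>x. G x * approx_ind a b k x) \<in> borel_measurable lborel" for k
  proof -
    have "continuous_on UNIV (approx_ind a b k)"
      using smooth_cont[OF approx_ind_smooth[of a b k], of 0] by simp
    then have "approx_ind a b k \<in> borel_measurable borel" by (rule borel_measurable_continuous_onI)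
    then have [measurable]: "approx_ind a b k \<in> borel_measurable lborel" by simp
    show ?thesis by measurable
  qed
  have "(\<lambda>k. integral\<^sup>L lborel (\<lambda>x. G x * approx_ind a b k x)) \<longlonglongrightarrow>
      integral\<^sup>L lborel (\<lambda>x. G x * indicator {a..b} x)"
  proof (rule integral_dominated_convergence[where w="?w"])
    show "(\<lambda>x. G x * indicator {a..b} x) \<in> borel_measurable lborel" by measurable
    show "integrable lborel ?w" using loc by (rule integrable_abs)
    show "AE x in lborel. (\<lambda>k. G x * approx_ind a b k x) \<longlonglongrightarrow> G x * indicator {a..b} x"
      by (intro AE_I2 tendsto_mult tendsto_const approx_ind_lim)
    show "AE x in lborel. norm (G x * approx_ind a b k x) \<le> ?w x" for k
    proof (intro AE_I2)
      fix x
      show "norm (G x * approx_ind a b k x) \<le> ?w x"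
      proof (cases "x \<in> {a-1..b+1}")
        case True
        then show ?thesis using approx_ind_bound[of a b k x]
          by (simp add: abs_mult mult_left_le)
      next
        case False
        then show ?thesis by (auto simp: approx_ind_zero)
      qed
    qed
  qed (use meas in auto)
  moreover have "integral\<^sup>L lborel (\<lambda>x. G x * approx_ind a b k x) = 0" for k
    using test[OF approx_ind_test] .
  ultimately show ?thesis by (simp add: LIMSEQ_const_iff)
qed

lemma ae_zero:
  fixes G :: "real \<Rightarrow> real"
  assumes G[measurable]: "G \<in> borel_measurable lborel"
    and loc: "\<And>c d. integrable lborel (\<lambda>x. G x * indicator {c..d} x)"
    and iv: "\<And>a b. integral\<^sup>L lborel (\<lambda>x. G x * indicator {a..b} x) = 0"
  shows "AE x in lborel. G x = 0"
proof -
  have "AE x in lborel. G x * indicator {-real N..real N} x = 0" for N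
  proof (rule sigma_finite_measure.density_zero[OF sigma_finite_lborel])
    let ?H = "\<lambda>x. G x * indicator {-real N..real N} x"
    show int: "integrable lborel ?H" by (rule loc)
    fix A :: "real set" assume "A \<in> sets lborel"
    then have A: "A \<in> sets borel" by simp
    then show "set_lebesgue_integral lborel A ?H = 0"
    proof (induction rule: borel_set_induct)
      case empty
      then show ?case by (simp add: set_lebesgue_integral_def)
    next
      case (interval a b)
      have "(\<lambda>x. indicator {a..b} x *\<^sub>R ?H x) = (\<lambda>x. G x * indicator {max a (-real N)..min b (real N)} x)"
        by (auto simp: indicator_def fun_eq_iff)
      then show ?case using iv by (simp add: set_lebesgue_integral_def)
    next
      case (compl A)
      have iA: "integrable lborel (\<lambda>x. indicator A x *\<^sub>R ?H x)"
        using compl.hyps by (intro integrable_mult_indicator int) auto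
      have "(\<lambda>x. indicator (-A) x *\<^sub>R ?H x) = (\<lambda>x. ?H x - indicator A x *\<^sub>R ?H x)"
        by (auto simp: indicator_def fun_eq_iff)
      then have "set_lebesgue_integral lborel (-A) ?H = integral\<^sup>L lborel ?H - set_lebesgue_integral lborel A ?H"
        unfolding set_lebesgue_integral_def using int iA by simp
      then show ?case using compl.IH iv by simp
    next
      case (union f)
      have "set_lebesgue_integral lborel (\<Union>i. f i) ?H = (\<Sum>i. set_lebesgue_integral lborel (f i) ?H)"
      proof (rule lebesgue_integral_countable_add)
        show "f i \<in> sets lborel" for i using union.hyps by simp
        show "f i \<inter> f j = {}" if "i \<noteq> j" for i j using union.hyps(1) that by (simp add: disjoint_family_on_def)
        show "set_integrable lborel (\<Union>i. f i) ?H"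
          unfolding set_integrable_def using union.hyps
          by (intro integrable_mult_indicator int) auto
      qed
      then show ?case using union.IH by simp
    qed
  qed
  then have "AE x in lborel. \<forall>N::nat. G x * indicator {-real N..real N} x = 0"
    by (subst AE_all_countable) blast
  then show ?thesis
  proof (rule AE_mp[OF _ AE_I2], intro impI)
    fix x assume h: "\<forall>N::nat. G x * indicator {-real N..real N} x = 0"
    obtain N :: nat where "\<bar>x\<bar> \<le> real N" using real_arch_simple by blast
    then show "G x = 0" using h[rule_format, of N] by (auto simp: indicator_def)
  qed
qed


lemma gauss_rho_pos: "gauss_rho x > 0" by (simp add: gauss_rho_def)

lemma cont_bounded_on:
  fixes \<phi> :: "real \<Rightarrow> real"
  assumes "continuous_on UNIV \<phi>"
  shows "\<exists>M. \<forall>x\<in>{c..d}. \<bar>\<phi> x\<bar> \<le> M"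
proof -
  have "compact (\<phi> ` {c..d})"
    by (rule compact_continuous_image[OF continuous_on_subset[OF assms]]) auto
  then have "bounded (\<phi> ` {c..d})" by (rule compact_imp_bounded)
  then obtain a where "\<forall>y\<in>\<phi> ` {c..d}. \<bar>y\<bar> \<le> a" unfolding bounded_real by blast
  then show ?thesis by auto
qed

lemma amgm_aux:
  fixes r a b :: real
  assumes r: "0 < r" and a: "0 \<le> a" and b: "0 \<le> b"
  shows "a*b \<le> a^2*r + b^2/r"
proof -
  have "0 \<le> (a*r - b)^2" by simp
  then have "2*(a*r*b) \<le> (a*r)^2 + b^2" by (simp add: power2_diff algebra_simps)
  moreover have "0 \<le> a*r*b" using r a b by simp
  ultimately have "a*r*b \<le> (a*r)^2 + b^2" by linarith
  then have "a*b \<le> ((a*r)^2 + b^2) / r" using r by (simp add: pos_le_divide_eq mult_ac)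
  also have "\<dots> = a^2*r + b^2/r" using r by (simp add: add_divide_distrib power2_eq_square)
  finally show ?thesis .
qed
lemma L2rho_loc:
  fixes g \<psi> :: "real \<Rightarrow> real"
  assumes g: "L2rho g" and \<psi>[measurable]: "\<psi> \<in> borel_measurable lborel"
    and bd: "\<And>x. \<bar>\<psi> x\<bar> \<le> M" and z: "\<And>x. x < c \<or> x > d \<Longrightarrow> \<psi> x = 0"
  shows "integrable lborel (\<lambda>x. g x * \<psi> x)"
proof -
  have gm[measurable]: "g \<in> borel_measurable lborel" and gi: "integrable lborel (\<lambda>x. (g x)\<^sup>2 * gauss_rho x)"
    using g by (auto simp: L2rho_def)
  define K where "K = M\<^sup>2 * (sqrt (2 * pi) * exp ((c\<^sup>2 + d\<^sup>2) / 2))"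
  let ?w = "\<lambda>x. (g x)\<^sup>2 * gauss_rho x + K * indicator {c..d} x"
  have ii: "integrable lborel (indicator {c..d} :: real \<Rightarrow> real)"
    by (intro integrable_real_indicator) (auto simp: emeasure_lborel_Icc_eq)
  have wi: "integrable lborel ?w"
    using ii gi by (intro Bochner_Integration.integrable_add integrable_mult_right) auto
  have gpm: "(\<lambda>x. g x * \<psi> x) \<in> borel_measurable lborel" by measurable
  have bnd: "norm (g x * \<psi> x) \<le> norm (?w x)" for x
  proof -
    have r: "gauss_rho x > 0" by (rule gauss_rho_pos)
    have key: "\<bar>g x\<bar> * \<bar>\<psi> x\<bar> \<le> (g x)\<^sup>2 * gauss_rho x + (\<psi> x)\<^sup>2 / gauss_rho x"
      using amgm_aux[OF r, of "\<bar>g x\<bar>" "\<bar>\<psi> x\<bar>"] by simp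
    have psi2: "(\<psi> x)\<^sup>2 / gauss_rho x \<le> K * indicator {c..d} x"
    proof (cases "x \<in> {c..d}")
      case True
      have "x\<^sup>2 \<le> c\<^sup>2 + d\<^sup>2"
      proof (cases "x \<ge> 0")
        case True
        then have "x\<^sup>2 \<le> d\<^sup>2" using \<open>x \<in> {c..d}\<close> by (auto intro: power_mono)
        then show ?thesis by (simp add: add_increasing)
      next
        case False
        then have "(-x)\<^sup>2 \<le> (-c)\<^sup>2" using \<open>x \<in> {c..d}\<close> by (intro power_mono) auto
        then show ?thesis by (simp add: add_increasing2)
      qed
      then have e: "exp (x\<^sup>2 / 2) \<le> exp ((c\<^sup>2 + d\<^sup>2) / 2)" by simp
      have inv: "(\<psi> x)\<^sup>2 / gauss_rho x = (\<psi> x)\<^sup>2 * (sqrt (2 * pi) * exp (x\<^sup>2 / 2))"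
        unfolding gauss_rho_def
        by (metis (no_types, opaque_lifting) div_by_1 divide_divide_eq_right
           exp_minus' minus_divide_left times_divide_eq_right)
      have m: "(\<psi> x)\<^sup>2 \<le> M\<^sup>2"
        using bd[of x] by (metis abs_ge_zero order_trans power2_abs power_mono)
      have "(\<psi> x)\<^sup>2 * (sqrt (2 * pi) * exp (x\<^sup>2 / 2)) \<le> M\<^sup>2 * (sqrt (2 * pi) * exp ((c\<^sup>2 + d\<^sup>2) / 2))"
        using m e by (intro mult_mono) auto
      then show ?thesis using True inv by (simp add: K_def)
    next
      case False
      then show ?thesis using z[of x] by auto
    qed
    have "norm (g x * \<psi> x) \<le> ?w x" using key psi2 by (simp add: abs_mult)
    then show "norm (g x * \<psi> x) \<le> norm (?w x)" by simp
  qed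
  show ?thesis
    by (rule Bochner_Integration.integrable_bound[OF wi gpm]) (intro AE_I2 bnd)
qed

lemma test_fun_integrable:
  assumes g: "L2rho g" and \<phi>: "test_fun \<phi>"
  shows "integrable lborel (\<lambda>x. g x * \<phi> x)"
proof -
  obtain R where R: "\<forall>x. \<bar>x\<bar> > R \<longrightarrow> \<phi> x = 0" using \<phi> unfolding test_fun_def by blast
  have c: "continuous_on UNIV \<phi>" using test_fun_cont[OF \<phi>, of 0] by simp
  obtain M where M: "\<forall>x\<in>{-R..R}. \<bar>\<phi> x\<bar> \<le> M" using cont_bounded_on[OF c] by blast
  have bd: "\<bar>\<phi> x\<bar> \<le> \<bar>M\<bar>" for x
  proof (cases "x \<in> {-R..R}")
    case True then show ?thesis using M by force
  next
    case False then show ?thesis using R by auto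
  qed
  have m: "\<phi> \<in> borel_measurable lborel"
    using borel_measurable_continuous_onI[OF c] by simp
  show ?thesis
    by (rule L2rho_loc[OF g m bd, of "-R" R]) (use R in auto)
qed

lemma indicator_integrable:
  assumes g: "L2rho g"
  shows "integrable lborel (\<lambda>x. g x * indicator {c..d} x)"
  by (rule L2rho_loc[OF g _ _, of _ 1 c d]) (auto simp: indicator_def)

lemma weak_unique:
  assumes g1: "L2rho g1" and g2: "L2rho g2"
    and eq: "\<And>\<phi>. test_fun \<phi> \<Longrightarrow> integral\<^sup>L lborel (\<lambda>x. g1 x * \<phi> x) = integral\<^sup>L lborel (\<lambda>x. g2 x * \<phi> x)"
  shows "AE x in lborel. g1 x = g2 x"
proof -
  let ?G = "\<lambda>x. g1 x - g2 x"
  have m1[measurable]: "g1 \<in> borel_measurable lborel" using g1 by (simp add: L2rho_def)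
  have m2[measurable]: "g2 \<in> borel_measurable lborel" using g2 by (simp add: L2rho_def)
  have Gm: "?G \<in> borel_measurable lborel" by measurable
  have loc: "integrable lborel (\<lambda>x. ?G x * indicator {c..d} x)" for c d
  proof -
    have "integrable lborel (\<lambda>x. g1 x * indicator {c..d} x - g2 x * indicator {c..d} x)"
      by (intro Bochner_Integration.integrable_diff indicator_integrable g1 g2)
    then show ?thesis by (simp add: left_diff_distrib)
  qed
  have test: "integral\<^sup>L lborel (\<lambda>x. ?G x * \<phi> x) = 0" if \<phi>: "test_fun \<phi>" for \<phi>
  proof -
    have "integral\<^sup>L lborel (\<lambda>x. ?G x * \<phi> x) = integral\<^sup>L lborel (\<lambda>x. g1 x * \<phi> x - g2 x * \<phi> x)"
      by (simp add: left_diff_distrib)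
    also have "\<dots> = integral\<^sup>L lborel (\<lambda>x. g1 x * \<phi> x) - integral\<^sup>L lborel (\<lambda>x. g2 x * \<phi> x)"
      by (intro Bochner_Integration.integral_diff test_fun_integrable g1 g2 \<phi>)
    finally show ?thesis using eq[OF \<phi>] by simp
  qed
  have "AE x in lborel. ?G x = 0"
    by (rule ae_zero[OF Gm loc interval_zero[OF Gm loc test]])
  then show ?thesis by auto
qed

lemma weak_derivs_unique:
  assumes w1: "weak_derivs \<alpha> f g" and w2: "weak_derivs \<alpha> f g'" and t: "\<tau> \<le> \<alpha>"
  shows "AE x in lborel. g' \<tau> x = g \<tau> x"
proof (cases "\<tau> = 0")
  case True
  then show ?thesis using w1 w2 by (simp add: weak_derivs_def)
next
  case False
  then have t1: "1 \<le> \<tau>" by simp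
  show ?thesis
  proof (rule weak_unique)
    show "L2rho (g' \<tau>)" "L2rho (g \<tau>)" using w1 w2 t by (auto simp: weak_derivs_def)
    fix \<phi> assume \<phi>: "test_fun \<phi>"
    have e1: "integral\<^sup>L lborel (\<lambda>x. f x * (deriv ^^ \<tau>) \<phi> x) = (-1) ^ \<tau> * integral\<^sup>L lborel (\<lambda>x. g \<tau> x * \<phi> x)"
      using w1 t t1 \<phi> unfolding weak_derivs_def by blast
    have e2: "integral\<^sup>L lborel (\<lambda>x. f x * (deriv ^^ \<tau>) \<phi> x) = (-1) ^ \<tau> * integral\<^sup>L lborel (\<lambda>x. g' \<tau> x * \<phi> x)"
      using w2 t t1 \<phi> unfolding weak_derivs_def by blast
    have "(-1) ^ \<tau> * integral\<^sup>L lborel (\<lambda>x. g' \<tau> x * \<phi> x) = (-1) ^ \<tau> * integral\<^sup>L lborel (\<lambda>x. g \<tau> x * \<phi> x)"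
      using e1 e2 by simp
    then show "integral\<^sup>L lborel (\<lambda>x. g' \<tau> x * \<phi> x) = integral\<^sup>L lborel (\<lambda>x. g \<tau> x * \<phi> x)"
      by simp
  qed
qed

lemma Hnorm_eq:
  assumes w: "weak_derivs \<alpha> f g"
  shows "Hnorm \<alpha> f = sqrt (\<Sum>\<tau>\<le>\<alpha>. integral\<^sup>L lborel (\<lambda>x. (g \<tau> x)\<^sup>2 * gauss_rho x))"
proof -
  define g' where "g' = (SOME g. weak_derivs \<alpha> f g)"
  have w': "weak_derivs \<alpha> f g'" unfolding g'_def by (rule someI[where P="weak_derivs \<alpha> f", OF w])
  have "integral\<^sup>L lborel (\<lambda>x. (g' \<tau> x)\<^sup>2 * gauss_rho x) = integral\<^sup>L lborel (\<lambda>x. (g \<tau> x)\<^sup>2 * gauss_rho x)"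
    if t: "\<tau> \<le> \<alpha>" for \<tau>
  proof (rule integral_cong_AE)
    have "g' \<tau> \<in> borel_measurable lborel" "g \<tau> \<in> borel_measurable lborel"
      using w w' t by (auto simp: weak_derivs_def L2rho_def)
    moreover have "gauss_rho \<in> borel_measurable lborel"
      unfolding gauss_rho_def by measurable
    ultimately show "(\<lambda>x. (g' \<tau> x)\<^sup>2 * gauss_rho x) \<in> borel_measurable lborel"
        "(\<lambda>x. (g \<tau> x)\<^sup>2 * gauss_rho x) \<in> borel_measurable lborel" by measurable
    show "AE x in lborel. (g' \<tau> x)\<^sup>2 * gauss_rho x = (g \<tau> x)\<^sup>2 * gauss_rho x"
      using weak_derivs_unique[OF w w' t] by auto
  qed
  then show ?thesis
    unfolding Hnorm_def g'_def[symmetric] Let_def by simp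
qed

lemma smooth_weak_derivs:
  assumes f: "smooth f" "\<forall>x. x < a \<or> x > b \<longrightarrow> f x = 0"
  shows "weak_derivs \<alpha> f (\<lambda>\<tau>. (deriv ^^ \<tau>) f)"
proof -
  have cr: "continuous_on UNIV gauss_rho" unfolding gauss_rho_def by (intro continuous_intros) auto
  have L: "L2rho ((deriv ^^ \<tau>) f)" for \<tau>
    unfolding L2rho_def
  proof
    have c: "continuous_on UNIV ((deriv ^^ \<tau>) f)" by (rule smooth_cont[OF f(1)])
    have z: "\<forall>x. x < a \<or> x > b \<longrightarrow> (deriv ^^ \<tau>) f x = 0" by (rule zero_outside_derivs[OF f])
    show "(deriv ^^ \<tau>) f \<in> borel_measurable lborel"
      using borel_measurable_continuous_onI[OF c] by simp
    show "integrable lborel (\<lambda>x. ((deriv ^^ \<tau>) f x)\<^sup>2 * gauss_rho x)"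
      by (rule lint_eq_integral(1)[of _ a b]) (use c cr z in \<open>auto intro!: continuous_intros\<close>)
  qed
  have W: "\<And>\<tau> \<phi>. test_fun \<phi> \<Longrightarrow> integral\<^sup>L lborel (\<lambda>x. f x * (deriv ^^ \<tau>) \<phi> x) =
      (-1) ^ \<tau> * integral\<^sup>L lborel (\<lambda>x. (deriv ^^ \<tau>) f x * \<phi> x)"
    by (rule smooth_weak[OF f])
  show ?thesis unfolding weak_derivs_def using L W by simp
qed

definition Bf :: "real \<Rightarrow> real" where
  "Bf t = Efun (3 * t + (-1)) * Efun ((-3) * t + 2)"

lemma smooth_Bf: "smooth Bf"
  unfolding Bf_def[abs_def] by (intro smooth_mult smooth_affine smooth_Efun)

lemma Bf_nonneg: "Bf t \<ge> 0" by (simp add: Bf_def Efun_nonneg)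

lemma Bf_zero: "t < 1/3 \<or> t > 2/3 \<Longrightarrow> Bf t = 0"
  by (auto simp: Bf_def Efun_zero)

lemma Efun_ge: "y \<ge> 1/5 \<Longrightarrow> Efun y \<ge> exp (-5)"
proof -
  assume y: "y \<ge> 1/5"
  then have "1 / y \<le> 5" by (simp add: divide_le_eq)
  then show ?thesis using y by (simp add: Efun_def)
qed

lemma Bf_lower: "t \<in> {2/5..3/5} \<Longrightarrow> Bf t \<ge> exp (-10)"
proof -
  assume t: "t \<in> {2/5..3/5}"
  have "Efun (3 * t + (-1)) \<ge> exp (-5)" "Efun ((-3) * t + 2) \<ge> exp (-5)"
    using t by (auto intro!: Efun_ge)
  then have "exp (-5) * exp (-5) \<le> Bf t" unfolding Bf_def
    by (intro mult_mono) (auto simp: Efun_nonneg)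
  then show ?thesis by (simp add: exp_add[symmetric])
qed

lemma Bf_derivs_zero: "t < 1/3 \<or> t > 2/3 \<Longrightarrow> (deriv ^^ k) Bf t = 0"
  using zero_outside_derivs[OF smooth_Bf, of "1/3" "2/3" k] Bf_zero by blast

lemma Bf_bound: "\<exists>K>0. \<forall>\<tau>\<le>\<alpha>. \<forall>t. ((deriv ^^ \<tau>) Bf t)\<^sup>2 \<le> K"
proof -
  have "\<forall>\<tau>. \<exists>M. \<forall>x\<in>{0..1}. \<bar>(deriv ^^ \<tau>) Bf x\<bar> \<le> M"
    using cont_bounded_on[OF smooth_cont[OF smooth_Bf]] by blast
  then obtain Mf where Mf: "\<And>\<tau> x. x \<in> {0..1} \<Longrightarrow> \<bar>(deriv ^^ \<tau>) Bf x\<bar> \<le> Mf \<tau>" by metis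
  define K where "K = 1 + (\<Sum>\<tau>\<le>\<alpha>. (Mf \<tau>)\<^sup>2)"
  have K: "K > 0" unfolding K_def by (simp add: add_pos_nonneg sum_nonneg)
  have "((deriv ^^ \<tau>) Bf t)\<^sup>2 \<le> K" if "\<tau> \<le> \<alpha>" for \<tau> t
  proof (cases "t \<in> {0..1}")
    case True
    have "((deriv ^^ \<tau>) Bf t)\<^sup>2 \<le> (Mf \<tau>)\<^sup>2"
      using Mf[OF True, of \<tau>] by (metis abs_ge_zero order_trans power2_abs power_mono)
    also have "\<dots> \<le> (\<Sum>\<tau>\<le>\<alpha>. (Mf \<tau>)\<^sup>2)"
      using that by (intro member_le_sum) auto
    finally show ?thesis unfolding K_def by simp
  next
    case False
    then show ?thesis using K Bf_derivs_zero[of t \<tau>] by auto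
  qed
  then show ?thesis using K by blast
qed

lemma sq_sum_disjoint:
  fixes a :: "nat \<Rightarrow> real"
  assumes "finite J" "\<And>i j. i \<in> J \<Longrightarrow> j \<in> J \<Longrightarrow> i \<noteq> j \<Longrightarrow> a i * a j = 0"
  shows "(\<Sum>j\<in>J. a j)\<^sup>2 = (\<Sum>j\<in>J. (a j)\<^sup>2)"
proof -
  have "(\<Sum>j\<in>J. a j)\<^sup>2 = (\<Sum>i\<in>J. \<Sum>j\<in>J. a i * a j)"
    by (simp add: power2_eq_square sum_product)
  also have "\<dots> = (\<Sum>i\<in>J. \<Sum>j\<in>J. if j = i then (a i)\<^sup>2 else 0)"
    using assms(2) by (intro sum.cong refl) (auto simp: power2_eq_square)
  also have "\<dots> = (\<Sum>i\<in>J. (a i)\<^sup>2)"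
    using assms(1) by simp
  finally show ?thesis .
qed

lemma deriv_funpow_affine_sum:
  assumes B: "smooth B" and J: "finite J"
  shows "(deriv ^^ \<tau>) (\<lambda>x. \<Sum>j\<in>J. B (a * x + c j)) = (\<lambda>x. \<Sum>j\<in>J. a ^ \<tau> * (deriv ^^ \<tau>) B (a * x + c j))"
proof (induction \<tau>)
  case 0
  then show ?case by simp
next
  case (Suc \<tau>)
  have "deriv (\<lambda>x. \<Sum>j\<in>J. a ^ \<tau> * (deriv ^^ \<tau>) B (a * x + c j))
      = (\<lambda>x. \<Sum>j\<in>J. a ^ Suc \<tau> * (deriv ^^ Suc \<tau>) B (a * x + c j))"
  proof (rule deriv_ext)
    fix x
    show "((\<lambda>x. \<Sum>j\<in>J. a ^ \<tau> * (deriv ^^ \<tau>) B (a * x + c j)) has_real_derivative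
        (\<Sum>j\<in>J. a ^ Suc \<tau> * (deriv ^^ Suc \<tau>) B (a * x + c j))) (at x)"
    proof (rule DERIV_sum)
      fix j
      have "((\<lambda>x. a * x + c j) has_real_derivative a) (at x)"
        by (auto intro!: derivative_eq_intros)
      from DERIV_chain2[OF smooth_DERIV[OF B] this]
      have d: "((\<lambda>x. (deriv ^^ \<tau>) B (a * x + c j)) has_real_derivative
          (deriv ^^ Suc \<tau>) B (a * x + c j) * a) (at x)" .
      then show "((\<lambda>x. a ^ \<tau> * (deriv ^^ \<tau>) B (a * x + c j)) has_real_derivative
          a ^ Suc \<tau> * (deriv ^^ Suc \<tau>) B (a * x + c j)) (at x)"
        using DERIV_cmult[OF d, of "a ^ \<tau>"] by (simp add: mult_ac)
    qed
  qed
  then show ?case using Suc by simp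
qed

lemma alg_aux:
  fixes X Y P Q c2 C1 S1 h :: real
  assumes "X * P = h" "Y * Q = 1" "P > 0" "Q > 0" "c2 > 0"
  shows "C1 / c2 * X * S1 * Y = C1 * h * S1 / (c2 * P * Q)"
proof -
  have X: "X = h / P" using assms by (simp add: eq_divide_eq)
  have Y: "Y = 1 / Q" using assms by (simp add: eq_divide_eq)
  show ?thesis unfolding X Y using assms by simp
qed

lemma final_alg:
  fixes h S1 S2 C1 C2 I Hn \<sigma> :: real
  assumes h: "h > 0" and S: "S1 > 0" "S2 > 0" and C: "C1 > 0" "C2 > 0"
    and I: "I \<ge> C1 * h * S1" and Hn: "Hn > 0" "Hn\<^sup>2 \<le> C2 * h powr (1 - 2 * \<sigma>) * S2"
  shows "C1 / sqrt C2 * h powr (\<sigma> + 1/2) * S1 * S2 powr (-1/2) \<le> I / Hn"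
proof -
  define U where "U = sqrt C2 * h powr ((1 - 2 * \<sigma>) / 2) * sqrt S2"
  have U: "U > 0" unfolding U_def using h S C by simp
  have "Hn \<le> sqrt (C2 * h powr (1 - 2 * \<sigma>) * S2)" using Hn by (intro real_le_rsqrt) simp
  also have "\<dots> = U" unfolding U_def using h
    by (simp add: real_sqrt_mult powr_half_sqrt_powr[symmetric])
  finally have HU: "Hn \<le> U" .
  have "C1 * h * S1 / U \<le> I / U" using I U by (simp add: divide_right_mono)
  also have "\<dots> \<le> I / Hn"
  proof (rule divide_left_mono[OF HU])
    show "0 \<le> I" using I C h S by (meson less_le_not_le mult_pos_pos order_trans)
    show "0 < U * Hn" using U Hn by simp
  qed
  finally have *: "C1 * h * S1 / U \<le> I / Hn" .
  have e1: "h powr (\<sigma> + 1/2) * h powr ((1 - 2 * \<sigma>) / 2) = h"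
  proof -
    have "(\<sigma> + 1/2) + (1 - 2 * \<sigma>) / 2 = 1" by (simp add: field_simps)
    then show ?thesis using h by (simp add: powr_add[symmetric])
  qed
  have e2: "S2 powr (-1/2) * sqrt S2 = 1"
    using S by (simp add: powr_minus powr_half_sqrt[symmetric])
  have "C1 / sqrt C2 * h powr (\<sigma> + 1/2) * S1 * S2 powr (-1/2) = C1 * h * S1 / U"
    unfolding U_def using alg_aux[OF e1 e2] h S C by simp
  then show ?thesis using * by simp
qed

lemma rho_lower:
  assumes "a \<le> x" "x \<le> b"
  shows "exp (- max (a\<^sup>2) (b\<^sup>2) / 2) / sqrt (2 * pi) \<le> gauss_rho x"
proof -
  have "x\<^sup>2 \<le> max (a\<^sup>2) (b\<^sup>2)"
  proof (cases "x \<ge> 0")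
    case True
    then have "x\<^sup>2 \<le> b\<^sup>2" using assms by (intro power_mono) auto
    then show ?thesis by simp
  next
    case False
    then have "(-x)\<^sup>2 \<le> (-a)\<^sup>2" using assms by (intro power_mono) auto
    then show ?thesis by simp
  qed
  then show ?thesis unfolding gauss_rho_def by (intro divide_right_mono) auto
qed

lemma rho_upper:
  assumes "a \<le> x" "x \<le> b"
  shows "gauss_rho x \<le> exp (- (ind_nonneg (a * b) * min (a\<^sup>2) (b\<^sup>2)) / 2) / sqrt (2 * pi)"
proof -
  have "ind_nonneg (a * b) * min (a\<^sup>2) (b\<^sup>2) \<le> x\<^sup>2"
  proof (cases "a * b \<ge> 0")
    case True
    have "min (a\<^sup>2) (b\<^sup>2) \<le> x\<^sup>2"
    proof (cases "a \<ge> 0")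
      case True
      then have "a\<^sup>2 \<le> x\<^sup>2" using assms by (intro power_mono) auto
      then show ?thesis by simp
    next
      case False
      with \<open>a * b \<ge> 0\<close> have "b \<le> 0" by (simp add: zero_le_mult_iff)
      then have "(-b)\<^sup>2 \<le> (-x)\<^sup>2" using assms by (intro power_mono) auto
      then show ?thesis by simp
    qed
    then show ?thesis using True by (simp add: ind_nonneg_def)
  next
    case False
    then show ?thesis by (simp add: ind_nonneg_def)
  qed
  then show ?thesis unfolding gauss_rho_def by (intro divide_right_mono) auto
qed

lemma powr_bound:
  fixes h :: real and \<tau> \<alpha> :: nat
  assumes h: "h > 0" and t: "\<tau> \<le> \<alpha>"
  shows "(1/h) ^ (2 * \<tau>) * h \<le> h powr (1 - 2 * (if h \<le> 1 then real \<alpha> else 0))"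
proof -
  have "(1/h) ^ (2 * \<tau>) * h = h powr (1 - 2 * real \<tau>)"
  proof -
    have "h powr (1 - 2 * real \<tau>) = h powr 1 / h powr (real (2 * \<tau>))"
      by (simp add: powr_diff)
    also have "\<dots> = h / h ^ (2 * \<tau>)" using h powr_realpow[OF h, of "2 * \<tau>"] by simp
    finally show ?thesis by (simp add: power_one_over field_simps)
  qed
  also have "\<dots> \<le> h powr (1 - 2 * (if h \<le> 1 then real \<alpha> else 0))"
  proof (cases "h \<le> 1")
    case True
    then show ?thesis using h t by (simp add: powr_mono')
  next
    case False
    then have "h powr (1 - 2 * real \<tau>) \<le> h powr 1" by (intro powr_mono) auto
    then show ?thesis using False h by simp
  qed
  finally show ?thesis .
qed


lemma main_bound:
  fixes \<alpha> n :: nat and \<xi> w :: "nat \<Rightarrow> real" and K :: real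
  assumes n: "n \<ge> 2" and inc: "\<forall>j\<in>{1..<n}. \<xi> j < \<xi> (Suc j)"
    and K: "K > 0" "\<forall>\<tau>\<le>\<alpha>. \<forall>t. ((deriv ^^ \<tau>) Bf t)\<^sup>2 \<le> K"
  defines "J \<equiv> {1..<n}"
  defines "h \<equiv> Min ((\<lambda>i. \<xi> (Suc i) - \<xi> i) ` J)"
  defines "\<sigma> \<equiv> (if h \<le> 1 then real \<alpha> else 0)"
  defines "S1 \<equiv> (\<Sum>j\<in>J. exp (- max ((\<xi> j)\<^sup>2) ((\<xi> (Suc j))\<^sup>2) / 2))"
  defines "S2 \<equiv> (\<Sum>j\<in>J. exp (- (ind_nonneg (\<xi> j * \<xi> (Suc j)) * min ((\<xi> j)\<^sup>2) ((\<xi> (Suc j))\<^sup>2)) / 2))"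
  shows "ereal ((exp (-10) / 5 / sqrt (2 * pi)) / sqrt ((real \<alpha> + 1) * K / sqrt (2 * pi))
           * h powr (\<sigma> + 1/2) * S1 * S2 powr (-1/2)) \<le> wce \<alpha> n \<xi> w"
proof -
  have Jfin: "finite J" unfolding J_def by simp
  have Jne: "J \<noteq> {}" unfolding J_def using n by auto
  have hle: "h \<le> \<xi> (Suc j) - \<xi> j" if "j \<in> J" for j
    unfolding h_def using Jfin that by (intro Min_le) auto
  have hpos: "h > 0"
    unfolding h_def using Jfin Jne inc by (subst Min_gr_iff) (auto simp: J_def)
  have mono': "j \<le> n \<longrightarrow> \<xi> i \<le> \<xi> j" if "1 \<le> i" "i \<le> j" for i j
    using that(2)
  proof (induction j rule: dec_induct)
    case base then show ?case by simp
  next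
    case (step m)
    show ?case
    proof
      assume "Suc m \<le> n"
      then have "m \<in> J" using step.hyps that(1) unfolding J_def by auto
      then have "\<xi> m < \<xi> (Suc m)" using inc unfolding J_def by auto
      then show "\<xi> i \<le> \<xi> (Suc m)" using step.IH \<open>Suc m \<le> n\<close> by simp
    qed
  qed
  have mono: "\<xi> i \<le> \<xi> j" if "1 \<le> i" "i \<le> j" "j \<le> n" for i j
    using mono'[OF that(1,2)] that(3) by blast
  have gap: "\<xi> i + h \<le> \<xi> j" if "1 \<le> i" "i < j" "j \<le> n" for i j
  proof -
    have "i \<in> J" using that unfolding J_def by auto
    then have "\<xi> i + h \<le> \<xi> (Suc i)" using hle by force
    also have "\<xi> (Suc i) \<le> \<xi> j" using that by (intro mono) auto
    finally show ?thesis .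
  qed
  define c where "c = (\<lambda>j. - \<xi> j / h)"
  define f where "f = (\<lambda>x. \<Sum>j\<in>J. Bf ((1/h) * x + c j))"
  have u_eq: "(1/h) * x + c j = (x - \<xi> j) / h" for x j
    using hpos unfolding c_def by (simp add: field_simps)
  have fsm: "smooth f"
    unfolding f_def by (intro smooth_sum Jfin smooth_affine smooth_Bf)
  have uneg: "(1/h) * x + c j < 1/3" if "x < \<xi> j" for x j
  proof -
    have "(x - \<xi> j) / h < 0" using that hpos by (simp add: divide_neg_pos)
    then show ?thesis unfolding u_eq by linarith
  qed
  have ubig: "(1/h) * x + c j > 2/3" if "x > \<xi> j + h" for x j
  proof -
    have "1 < (x - \<xi> j) / h" using that hpos by (simp add: less_divide_eq)
    then show ?thesis unfolding u_eq by linarith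
  qed
  have ule: "(1/h) * x + c j \<le> 0" if "x \<le> \<xi> j" for x j
  proof -
    have "(x - \<xi> j) / h \<le> 0" using that hpos by (simp add: divide_nonpos_pos)
    then show ?thesis unfolding u_eq by linarith
  qed
  have uge: "(1/h) * x + c j \<ge> 1" if "x \<ge> \<xi> j + h" for x j
  proof -
    have "1 \<le> (x - \<xi> j) / h" using that hpos by (simp add: le_divide_eq)
    then show ?thesis unfolding u_eq by linarith
  qed
  have fz: "\<forall>x. x < \<xi> 1 \<or> x > \<xi> n \<longrightarrow> f x = 0"
  proof (intro allI impI)
    fix x assume x: "x < \<xi> 1 \<or> x > \<xi> n"
    have "Bf ((1/h) * x + c j) = 0" if "j \<in> J" for j
    proof -
      have j: "1 \<le> j" "j < n" using that unfolding J_def by auto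
      show ?thesis
      proof (cases "x < \<xi> 1")
        case True
        have "\<xi> 1 \<le> \<xi> j" using j by (intro mono) auto
        then show ?thesis using True uneg[of x j] by (intro Bf_zero) auto
      next
        case False
        then have "x > \<xi> n" using x by simp
        moreover have "\<xi> j + h \<le> \<xi> n" using j by (intro gap) auto
        ultimately show ?thesis using ubig[of j x] by (intro Bf_zero) auto
      qed
    qed
    then show "f x = 0" unfolding f_def by simp
  qed
  have wd: "weak_derivs \<alpha> f (\<lambda>\<tau>. (deriv ^^ \<tau>) f)"
    by (rule smooth_weak_derivs[OF fsm fz])
  have Hn: "Hnorm \<alpha> f = sqrt (\<Sum>\<tau>\<le>\<alpha>. integral\<^sup>L lborel (\<lambda>x. ((deriv ^^ \<tau>) f x)\<^sup>2 * gauss_rho x))"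
    using Hnorm_eq[OF wd] by simp
  have df: "(deriv ^^ \<tau>) f = (\<lambda>x. \<Sum>j\<in>J. (1/h) ^ \<tau> * (deriv ^^ \<tau>) Bf ((1/h) * x + c j))" for \<tau>
    unfolding f_def by (rule deriv_funpow_affine_sum[OF smooth_Bf Jfin])
  have supp: "\<xi> j + h/3 \<le> x \<and> x \<le> \<xi> j + 2*h/3" if "(deriv ^^ \<tau>) Bf ((1/h) * x + c j) \<noteq> 0" for \<tau> x j
  proof -
    have "\<not> ((x - \<xi> j) / h < 1/3 \<or> (x - \<xi> j) / h > 2/3)"
      using that Bf_derivs_zero unfolding u_eq by metis
    then have "1/3 \<le> (x - \<xi> j) / h" "(x - \<xi> j) / h \<le> 2/3" by auto
    then show ?thesis using hpos by (simp add: field_simps)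
  qed
  have disj: "((1/h) ^ \<tau> * (deriv ^^ \<tau>) Bf ((1/h) * x + c i)) * ((1/h) ^ \<tau> * (deriv ^^ \<tau>) Bf ((1/h) * x + c j)) = 0"
    if "i \<in> J" "j \<in> J" "i \<noteq> j" for \<tau> x i j
  proof (rule ccontr)
    assume "\<not> ?thesis"
    then have ne: "(deriv ^^ \<tau>) Bf ((1/h) * x + c i) \<noteq> 0" "(deriv ^^ \<tau>) Bf ((1/h) * x + c j) \<noteq> 0" by auto
    note si = supp[OF ne(1)] and sj = supp[OF ne(2)]
    have ij: "1 \<le> i" "i \<le> n" "1 \<le> j" "j \<le> n" using that unfolding J_def by auto
    show False
    proof (cases "i < j")
      case True
      then have "\<xi> i + h \<le> \<xi> j" using ij by (intro gap) auto
      then show False using si sj hpos by linarith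
    next
      case False
      then have "j < i" using that by simp
      then have "\<xi> j + h \<le> \<xi> i" using ij by (intro gap) auto
      then show False using si sj hpos by linarith
    qed
  qed
  define R where "R = (\<lambda>j. exp (- (ind_nonneg (\<xi> j * \<xi> (Suc j)) * min ((\<xi> j)\<^sup>2) ((\<xi> (Suc j))\<^sup>2)) / 2) / sqrt (2 * pi))"
  have TB: "integral\<^sup>L lborel (\<lambda>x. ((deriv ^^ \<tau>) f x)\<^sup>2 * gauss_rho x) \<le> (1/h) ^ (2 * \<tau>) * K * h * (\<Sum>j\<in>J. R j)"
    if t: "\<tau> \<le> \<alpha>" for \<tau>
  proof -
    let ?T = "\<lambda>j x. (1/h) ^ \<tau> * (deriv ^^ \<tau>) Bf ((1/h) * x + c j)"
    let ?U = "\<lambda>x. \<Sum>j\<in>J. (1/h) ^ (2 * \<tau>) * K * R j * indicator {\<xi> j..\<xi> j + h} x"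
    have pw: "((deriv ^^ \<tau>) f x)\<^sup>2 * gauss_rho x \<le> ?U x" for x
    proof -
      have "((deriv ^^ \<tau>) f x)\<^sup>2 = (\<Sum>j\<in>J. (?T j x)\<^sup>2)"
        unfolding df by (rule sq_sum_disjoint[OF Jfin]) (rule disj)
      then have "((deriv ^^ \<tau>) f x)\<^sup>2 * gauss_rho x = (\<Sum>j\<in>J. (?T j x)\<^sup>2 * gauss_rho x)"
        by (simp add: sum_distrib_right)
      also have "\<dots> \<le> ?U x"
      proof (rule sum_mono)
        fix j assume j: "j \<in> J"
        show "(?T j x)\<^sup>2 * gauss_rho x \<le> (1/h) ^ (2 * \<tau>) * K * R j * indicator {\<xi> j..\<xi> j + h} x"
        proof (cases "x \<in> {\<xi> j..\<xi> j + h}")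
          case True
          have jn: "\<xi> j + h \<le> \<xi> (Suc j)" using hle[OF j] by simp
          have D: "((deriv ^^ \<tau>) Bf ((1/h) * x + c j))\<^sup>2 \<le> K" using K(2) t by blast
          have r: "gauss_rho x \<le> R j" unfolding R_def
            using True jn by (intro rho_upper) auto
          have "(?T j x)\<^sup>2 * gauss_rho x = (1/h) ^ (2 * \<tau>) * (((deriv ^^ \<tau>) Bf ((1/h) * x + c j))\<^sup>2 * gauss_rho x)"
            by (simp add: power_mult_distrib power_mult[symmetric] mult.commute)
          also have "\<dots> \<le> (1/h) ^ (2 * \<tau>) * (K * R j)"
            using D r gauss_rho_pos[of x] K(1) hpos
            by (intro mult_left_mono mult_mono) auto
          finally show ?thesis using True by (simp add: mult_ac)
        next
          case False
          have "(deriv ^^ \<tau>) Bf ((1/h) * x + c j) = 0"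
          proof (rule ccontr)
            assume "(deriv ^^ \<tau>) Bf ((1/h) * x + c j) \<noteq> 0"
            then have "\<xi> j + h/3 \<le> x \<and> x \<le> \<xi> j + 2*h/3" by (rule supp)
            then show False using False hpos by auto
          qed
          then show ?thesis using False by simp
        qed
      qed
      finally show ?thesis .
    qed
    have intU: "integrable lborel ?U"
      by (intro Bochner_Integration.integrable_sum integrable_mult_right integrable_real_indicator)
         (auto simp: emeasure_lborel_Icc_eq)
    have intL: "integrable lborel (\<lambda>x. ((deriv ^^ \<tau>) f x)\<^sup>2 * gauss_rho x)"
      using wd t unfolding weak_derivs_def L2rho_def by blast
    have "integral\<^sup>L lborel (\<lambda>x. ((deriv ^^ \<tau>) f x)\<^sup>2 * gauss_rho x) \<le> integral\<^sup>L lborel ?U"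
      by (rule integral_mono[OF intL intU pw])
    also have "\<dots> = (\<Sum>j\<in>J. (1/h) ^ (2 * \<tau>) * K * R j * h)"
    proof -
      have "integral\<^sup>L lborel ?U = (\<Sum>j\<in>J. integral\<^sup>L lborel (\<lambda>x. (1/h) ^ (2 * \<tau>) * K * R j * indicator {\<xi> j..\<xi> j + h} x))"
        by (rule Bochner_Integration.integral_sum) (auto intro!: integrable_mult_right integrable_real_indicator simp: emeasure_lborel_Icc_eq)
      also have "\<dots> = (\<Sum>j\<in>J. (1/h) ^ (2 * \<tau>) * K * R j * h)"
        using hpos by (intro sum.cong refl) (simp add: measure_def emeasure_lborel_Icc_eq)
      finally show ?thesis .
    qed
    also have "\<dots> = (1/h) ^ (2 * \<tau>) * K * h * (\<Sum>j\<in>J. R j)"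
      by (subst sum_distrib_left) (simp add: mult_ac)
    finally show ?thesis .
  qed
  have S1pos: "S1 > 0" unfolding S1_def by (intro sum_pos Jfin Jne) auto
  have S2pos: "S2 > 0" unfolding S2_def by (intro sum_pos Jfin Jne) auto
  have sumR: "(\<Sum>j\<in>J. R j) = S2 / sqrt (2 * pi)" unfolding R_def S2_def by (simp add: sum_divide_distrib)
  have Rnn: "(\<Sum>j\<in>J. R j) \<ge> 0" using sumR S2pos by simp
  define C1 where "C1 = exp (-10) / 5 / sqrt (2 * pi)"
  define C2 where "C2 = (real \<alpha> + 1) * K / sqrt (2 * pi)"
  have C1pos: "C1 > 0" unfolding C1_def by simp
  have C2pos: "C2 > 0" unfolding C2_def using K(1) by simp
  define hp where "hp = h powr (1 - 2 * \<sigma>)"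
  have intnn: "0 \<le> integral\<^sup>L lborel (\<lambda>x. ((deriv ^^ \<tau>) f x)\<^sup>2 * gauss_rho x)" for \<tau>
    by (intro Bochner_Integration.integral_nonneg) (simp add: less_imp_le[OF gauss_rho_pos])
  have sumnn: "0 \<le> (\<Sum>\<tau>\<le>\<alpha>. integral\<^sup>L lborel (\<lambda>x. ((deriv ^^ \<tau>) f x)\<^sup>2 * gauss_rho x))"
    by (intro sum_nonneg intnn)
  have Hsq: "(Hnorm \<alpha> f)\<^sup>2 \<le> C2 * hp * S2"
  proof -
    have "(Hnorm \<alpha> f)\<^sup>2 = (\<Sum>\<tau>\<le>\<alpha>. integral\<^sup>L lborel (\<lambda>x. ((deriv ^^ \<tau>) f x)\<^sup>2 * gauss_rho x))"
      unfolding Hn using sumnn by simp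
    also have "\<dots> \<le> (\<Sum>\<tau>\<le>\<alpha>. K * (\<Sum>j\<in>J. R j) * ((1/h) ^ (2 * \<tau>) * h))"
    proof (rule sum_mono)
      fix \<tau> assume "\<tau> \<in> {..\<alpha>}"
      then have "integral\<^sup>L lborel (\<lambda>x. ((deriv ^^ \<tau>) f x)\<^sup>2 * gauss_rho x) \<le> (1/h) ^ (2 * \<tau>) * K * h * (\<Sum>j\<in>J. R j)"
        by (intro TB) auto
      then show "integral\<^sup>L lborel (\<lambda>x. ((deriv ^^ \<tau>) f x)\<^sup>2 * gauss_rho x) \<le> K * (\<Sum>j\<in>J. R j) * ((1/h) ^ (2 * \<tau>) * h)"
        by (simp add: mult_ac)
    qed
    also have "\<dots> \<le> (\<Sum>\<tau>\<le>\<alpha>. K * (\<Sum>j\<in>J. R j) * hp)"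
    proof (rule sum_mono)
      fix \<tau> assume "\<tau> \<in> {..\<alpha>}"
      then have "(1/h) ^ (2 * \<tau>) * h \<le> hp" unfolding hp_def \<sigma>_def by (intro powr_bound hpos) auto
      then show "K * (\<Sum>j\<in>J. R j) * ((1/h) ^ (2 * \<tau>) * h) \<le> K * (\<Sum>j\<in>J. R j) * hp"
        using K(1) Rnn by (intro mult_left_mono) auto
    qed
    also have "\<dots> = (real \<alpha> + 1) * (K * (\<Sum>j\<in>J. R j) * hp)" by simp
    also have "\<dots> = C2 * hp * S2" unfolding C2_def sumR by simp
    finally show ?thesis .
  qed
  have fcont: "continuous_on UNIV f" using smooth_cont[OF fsm, of 0] by simp
  have rcont: "continuous_on UNIV gauss_rho" unfolding gauss_rho_def by (intro continuous_intros) auto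
  have intF: "integrable lborel (\<lambda>x. f x * gauss_rho x)"
    by (rule lint_eq_integral(1)[of _ "\<xi> 1" "\<xi> n"]) (use fcont rcont fz in \<open>auto intro!: continuous_intros\<close>)
  define r where "r = (\<lambda>j. exp (- max ((\<xi> j)\<^sup>2) ((\<xi> (Suc j))\<^sup>2) / 2) / sqrt (2 * pi))"
  have Ibound: "gauss_int f \<ge> C1 * h * S1"
  proof -
    let ?V = "\<lambda>x. \<Sum>j\<in>J. exp (-10) * r j * indicator {\<xi> j + 2*h/5 .. \<xi> j + 3*h/5} x"
    have pw: "?V x \<le> f x * gauss_rho x" for x
    proof -
      have "?V x \<le> (\<Sum>j\<in>J. Bf ((1/h) * x + c j) * gauss_rho x)"
      proof (rule sum_mono)
        fix j assume j: "j \<in> J"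
        show "exp (-10) * r j * indicator {\<xi> j + 2*h/5 .. \<xi> j + 3*h/5} x \<le> Bf ((1/h) * x + c j) * gauss_rho x"
        proof (cases "x \<in> {\<xi> j + 2*h/5 .. \<xi> j + 3*h/5}")
          case True
          have jn: "\<xi> j + h \<le> \<xi> (Suc j)" using hle[OF j] by simp
          have u1: "2/5 \<le> (x - \<xi> j) / h" using True hpos by (simp add: le_divide_eq)
          have u2: "(x - \<xi> j) / h \<le> 3/5" using True hpos by (simp add: divide_le_eq)
          have b: "exp (-10) \<le> Bf ((1/h) * x + c j)"
            unfolding u_eq using u1 u2 by (intro Bf_lower) auto
          have rr: "r j \<le> gauss_rho x" unfolding r_def
            using True jn hpos by (intro rho_lower) auto
          have "exp (-10) * r j \<le> Bf ((1/h) * x + c j) * gauss_rho x"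
            using b rr by (intro mult_mono) (auto simp: r_def Bf_nonneg)
          then show ?thesis using True by simp
        next
          case False
          then show ?thesis using Bf_nonneg gauss_rho_pos[of x] by simp
        qed
      qed
      also have "\<dots> = f x * gauss_rho x" unfolding f_def by (simp add: sum_distrib_right)
      finally show ?thesis .
    qed
    have intV: "integrable lborel ?V"
      by (intro Bochner_Integration.integrable_sum integrable_mult_right integrable_real_indicator)
         (auto simp: emeasure_lborel_Icc_eq)
    have "integral\<^sup>L lborel ?V \<le> gauss_int f"
      unfolding gauss_int_def by (rule integral_mono[OF intV intF pw])
    moreover have "integral\<^sup>L lborel ?V = (\<Sum>j\<in>J. exp (-10) * r j * (h/5))"
    proof -
      have "integral\<^sup>L lborel ?V = (\<Sum>j\<in>J. integral\<^sup>L lborel (\<lambda>x. exp (-10) * r j * indicator {\<xi> j + 2*h/5 .. \<xi> j + 3*h/5} x))"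
        by (rule Bochner_Integration.integral_sum) (auto intro!: integrable_mult_right integrable_real_indicator simp: emeasure_lborel_Icc_eq)
      also have "\<dots> = (\<Sum>j\<in>J. exp (-10) * r j * (h/5))"
        using hpos by (intro sum.cong refl) (simp add: measure_def emeasure_lborel_Icc_eq)
      finally show ?thesis .
    qed
    moreover have "(\<Sum>j\<in>J. exp (-10) * r j * (h/5)) = C1 * h * S1"
    proof -
      have "(\<Sum>j\<in>J. exp (-10) * r j * (h/5)) = (\<Sum>j\<in>J. (C1 * h) * exp (- max ((\<xi> j)\<^sup>2) ((\<xi> (Suc j))\<^sup>2) / 2))"
        unfolding r_def C1_def by (intro sum.cong refl) (simp add: field_simps)
      also have "\<dots> = C1 * h * S1" unfolding S1_def by (simp add: sum_distrib_left)
      finally show ?thesis .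
    qed
    ultimately show ?thesis by simp
  qed
  have Ipos: "gauss_int f > 0"
    using Ibound C1pos hpos S1pos by (meson mult_pos_pos order_less_le_trans)
  have Hpos: "Hnorm \<alpha> f > 0"
  proof (rule ccontr)
    assume "\<not> Hnorm \<alpha> f > 0"
    then have "Hnorm \<alpha> f = 0" using Hn sumnn by simp
    then have "(\<Sum>\<tau>\<le>\<alpha>. integral\<^sup>L lborel (\<lambda>x. ((deriv ^^ \<tau>) f x)\<^sup>2 * gauss_rho x)) = 0"
      using Hn sumnn by simp
    then have "\<forall>\<tau>\<in>{..\<alpha>}. integral\<^sup>L lborel (\<lambda>x. ((deriv ^^ \<tau>) f x)\<^sup>2 * gauss_rho x) = 0"
      by (subst (asm) sum_nonneg_eq_0_iff) (auto intro: intnn)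
    then have z0: "integral\<^sup>L lborel (\<lambda>x. (f x)\<^sup>2 * gauss_rho x) = 0" by force
    have intL0: "integrable lborel (\<lambda>x. (f x)\<^sup>2 * gauss_rho x)"
      using wd unfolding weak_derivs_def L2rho_def by force
    have "AE x in lborel. (f x)\<^sup>2 * gauss_rho x = 0"
      using z0 by (subst (asm) integral_nonneg_eq_0_iff_AE[OF intL0])
         (auto simp: less_imp_le[OF gauss_rho_pos])
    then have "AE x in lborel. f x * gauss_rho x = 0"
      by eventually_elim (use gauss_rho_pos in \<open>auto simp: less_imp_neq[symmetric]\<close>)
    then have "gauss_int f = 0" unfolding gauss_int_def by (rule integral_eq_zero_AE)
    then show False using Ipos by simp
  qed
  have Q0: "quad n \<xi> w f = 0"
    unfolding quad_def
  proof (rule sum.neutral, intro ballI)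
    fix i assume i: "i \<in> {1..n}"
    have "Bf ((1/h) * \<xi> i + c j) = 0" if j: "j \<in> J" for j
    proof -
      have jj: "1 \<le> j" "j < n" using j unfolding J_def by auto
      show ?thesis
      proof (cases "i \<le> j")
        case True
        then have "\<xi> i \<le> \<xi> j" using i jj by (intro mono) auto
        then have "(1/h) * \<xi> i + c j < 1/3" using ule[of "\<xi> i" j] by linarith
        then show ?thesis by (intro Bf_zero) simp
      next
        case False
        then have ji: "j < i" by simp
        have "\<xi> j + h \<le> \<xi> i" by (rule gap) (use i jj ji in auto)
        then have "(1/h) * \<xi> i + c j > 2/3" using uge[of j "\<xi> i"] by linarith
        then show ?thesis by (intro Bf_zero) simp
      qed
    qed
    then have "f (\<xi> i) = 0" unfolding f_def by simp
    then show "w i * f (\<xi> i) = 0" by simp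
  qed
  have mem: "f \<in> {f \<in> Hspace \<alpha>. f \<noteq> (\<lambda>_. 0)}"
  proof -
    have "f \<noteq> (\<lambda>_. 0)"
    proof
      assume "f = (\<lambda>_. 0)"
      then have "gauss_int f = 0" by (simp add: gauss_int_def)
      then show False using Ipos by simp
    qed
    then show ?thesis unfolding Hspace_def using fcont wd by blast
  qed
  have fin: "C1 / sqrt C2 * h powr (\<sigma> + 1/2) * S1 * S2 powr (-1/2) \<le> gauss_int f / Hnorm \<alpha> f"
    by (rule final_alg[OF hpos S1pos S2pos C1pos C2pos Ibound Hpos Hsq[unfolded hp_def]])
  have ratio: "\<bar>gauss_int f - quad n \<xi> w f\<bar> / Hnorm \<alpha> f = gauss_int f / Hnorm \<alpha> f"
    using Q0 Ipos by simp
  have "ereal (C1 / sqrt C2 * h powr (\<sigma> + 1/2) * S1 * S2 powr (-1/2))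
      \<le> ereal (\<bar>gauss_int f - quad n \<xi> w f\<bar> / Hnorm \<alpha> f)"
    using fin unfolding ratio by simp
  also have "\<dots> \<le> wce \<alpha> n \<xi> w"
    unfolding wce_def by (rule SUP_upper[OF mem])
  finally show ?thesis unfolding C1_def C2_def .
qed

theorem lemma3p1:
  fixes \<alpha> :: nat
  assumes "\<alpha> \<ge> 1"
  shows "\<exists>c>0. \<forall>(n::nat) (\<xi>::nat \<Rightarrow> real) (w::nat \<Rightarrow> real).
     n \<ge> 2 \<and> (\<forall>j\<in>{1..<n}. \<xi> j < \<xi> (Suc j)) \<longrightarrow>
     (let h = Min ((\<lambda>i. \<xi> (Suc i) - \<xi> i) ` {1..<n});
          \<sigma> = (if h \<le> 1 then real \<alpha> else 0)
      in ereal (c * h powr (\<sigma> + 1/2)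
          * (\<Sum>j=1..<n. exp (- max ((\<xi> j)\<^sup>2) ((\<xi> (Suc j))\<^sup>2) / 2))
          * (\<Sum>k=1..<n. exp (- (ind_nonneg (\<xi> k * \<xi> (Suc k))
                 * min ((\<xi> k)\<^sup>2) ((\<xi> (Suc k))\<^sup>2)) / 2)) powr (-1/2))
         \<le> wce \<alpha> n \<xi> w)"
proof -
  obtain K where K: "K > 0" "\<forall>\<tau>\<le>\<alpha>. \<forall>t. ((deriv ^^ \<tau>) Bf t)\<^sup>2 \<le> K"
    using Bf_bound by blast
  define c where "c = (exp (-10) / 5 / sqrt (2 * pi)) / sqrt ((real \<alpha> + 1) * K / sqrt (2 * pi))"
  have cpos: "c > 0" using K by (simp add: c_def)
  show ?thesis
  proof (intro exI[of _ c] conjI allI impI)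
    show "c > 0" by (rule cpos)
    fix n :: nat and \<xi> w :: "nat \<Rightarrow> real"
    assume a: "n \<ge> 2 \<and> (\<forall>j\<in>{1..<n}. \<xi> j < \<xi> (Suc j))"
    show "let h = Min ((\<lambda>i. \<xi> (Suc i) - \<xi> i) ` {1..<n});
          \<sigma> = (if h \<le> 1 then real \<alpha> else 0)
      in ereal (c * h powr (\<sigma> + 1/2)
          * (\<Sum>j=1..<n. exp (- max ((\<xi> j)\<^sup>2) ((\<xi> (Suc j))\<^sup>2) / 2))
          * (\<Sum>k=1..<n. exp (- (ind_nonneg (\<xi> k * \<xi> (Suc k))
                 * min ((\<xi> k)\<^sup>2) ((\<xi> (Suc k))\<^sup>2)) / 2)) powr (-1/2))
         \<le> wce \<alpha> n \<xi> w"
      unfolding Let_def c_def using main_bound[of n \<xi> K \<alpha> w] a K by simp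
  qed
qed

end
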